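(* Let $\beta\in(0,1)$, $c>1-\beta$ and $\delta\in[0,1)$, and set $$E_N=\Big\{\sum_{i=\lceil N^\delta\rceil}^{N} w_i^\beta\le c^{-1}N^{1-\beta}\Big\}.$$ Then for every $\eta>0$, $\mathbb P(E_N)=o(N^{-\eta})$ as $N\to\infty$.
   Context: $\Xi$ is a Poisson point process on $(0,\infty)$ with intensity measure $x^{-2}dx$, and $w_1>w_2>\cdots$ are its atoms listed in decreasing order. *)

theory Defs
  imports "HOL-Probability.Probability" "HOL-Library.Landau_Symbols"
begin

definition inv_sq_intensity :: "real set \<Rightarrow> ennreal" where
  "inv_sq_intensity A = (\<integral>\<^sup>+ x. indicator ({0<..} \<inter> A) x * ennreal (1 / x\<^sup>2) \<partial>lborel)"

text \<open>w omega i (i = 0,1,2,...) is the (i+1)-st largest atom of a Poisson point process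
  on (0,oo) with intensity x^(-2) dx, i.e. w omega 0 = w_1 > w omega 1 = w_2 > ...\<close>
definition ppp_inv_sq :: "'a measure \<Rightarrow> ('a \<Rightarrow> nat \<Rightarrow> real) \<Rightarrow> bool" where
  "ppp_inv_sq M w \<longleftrightarrow>
     prob_space M \<and>
     (\<forall>i. (\<lambda>\<omega>. w \<omega> i) \<in> borel_measurable M) \<and>
     (\<forall>\<omega>\<in>space M. \<forall>i. 0 < w \<omega> i \<and> w \<omega> (Suc i) < w \<omega> i) \<and>
     (\<forall>(A :: nat \<Rightarrow> real set) (k :: nat).
        (\<forall>j<k. A j \<in> sets borel \<and> A j \<subseteq> {0<..} \<and> inv_sq_intensity (A j) < \<infinity>) \<and>
        disjoint_family_on A {..<k} \<longrightarrow>
          prob_space.indep_vars M (\<lambda>_. count_space (UNIV :: nat set))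
            (\<lambda>j \<omega>. card {i. w \<omega> i \<in> A j}) {..<k} \<and>
          (\<forall>j<k. \<forall>n::nat.
             measure M {\<omega>\<in>space M. card {i. w \<omega> i \<in> A j} = n}
               = enn2real (inv_sq_intensity (A j)) ^ n / fact n
                 * exp (- enn2real (inv_sq_intensity (A j)))))"

end

theory Submission
  imports Defs "HOL-Real_Asymp.Real_Asymp"
begin


lemma intensity_atLeast:
  assumes s: "(s::real) > 0"
  shows "inv_sq_intensity {s..} = ennreal (1/s)"
proof -
  have eq: "(\<lambda>x. indicator ({0<..} \<inter> {s..}) x * ennreal (1 / x\<^sup>2)) =
            (\<lambda>x. ennreal (1 / x\<^sup>2) * indicator {s..} x)"
    using s by (auto simp: fun_eq_iff split: split_indicator)
  have "(\<integral>\<^sup>+x. ennreal (1 / x\<^sup>2) * indicator {s..} x \<partial>lborel) = ennreal (0 - (- 1 / s))"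
  proof (rule nn_integral_FTC_atLeast)
    show "(\<lambda>x::real. 1 / x\<^sup>2) \<in> borel_measurable borel" by measurable
    fix x assume "s \<le> x"
    then have "x > 0" using s by simp
    show "((\<lambda>x. - 1 / x) has_real_derivative 1 / x\<^sup>2) (at x)"
      using \<open>x > 0\<close> by (auto intro!: derivative_eq_intros simp: power2_eq_square field_simps)
    show "0 \<le> 1 / x\<^sup>2" by simp
  next
    show "((\<lambda>x::real. - 1 / x) \<longlongrightarrow> 0) at_top" by real_asymp
  qed
  then show ?thesis unfolding inv_sq_intensity_def eq by simp
qed

lemma tele_step:
  assumes "(x::real) > 0" "0 < b" "b < 1"
  shows "(x+1) powr (1-b) - x powr (1-b) \<le> (1-b) * x powr (-b)"
proof -
  have "\<exists>z. x < z \<and> z < x+1 \<and> (x+1) powr (1-b) - x powr (1-b) = (x+1-x) * ((1-b) * z powr (1-b-1))"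
  proof (rule MVT2)
    fix y assume "x \<le> y" "y \<le> x + 1"
    then have "y > 0" using assms by simp
    show "((\<lambda>z. z powr (1-b)) has_real_derivative (1-b) * y powr (1-b-1)) (at y)"
      by (rule has_real_derivative_powr) fact
  qed simp
  then obtain z where z: "x < z" "(x+1) powr (1-b) - x powr (1-b) = (1-b) * z powr (-b)" by auto
  have "z powr (-b) \<le> x powr (-b)" using z assms by (intro powr_mono2') auto
  then show ?thesis using z assms by simp
qed

lemma tele_sum:
  assumes "0 < b" "b < 1" "1 \<le> m" "m \<le> N"
  shows "((real N + 1) powr (1-b) - real m powr (1-b)) / (1-b) \<le> (\<Sum>i\<in>{m..N}. real i powr (-b))"
  using assms(4)
proof (induction N rule: dec_induct)
  case base
  have "(real m + 1) powr (1-b) - real m powr (1-b) \<le> (1-b) * real m powr (-b)"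
    using assms by (intro tele_step) auto
  then show ?case using assms by (simp add: divide_le_eq mult.commute)
next
  case (step n)
  have "(real n + 1 + 1) powr (1-b) - (real n + 1) powr (1-b) \<le> (1-b) * (real n + 1) powr (-b)"
    using assms by (intro tele_step) auto
  then have "((real n + 1 + 1) powr (1-b) - (real n + 1) powr (1-b)) / (1-b) \<le> (real n + 1) powr (-b)"
    using assms by (simp add: divide_le_eq mult.commute)
  moreover have "{m..Suc n} = insert (Suc n) {m..n}" using step by auto
  ultimately show ?case using step
    by (simp add: diff_divide_distrib add.commute)
qed

lemma pow_fact_le_exp:
  assumes "(x::real) \<ge> 0"
  shows "x ^ n / fact n \<le> exp x"
proof -
  have "x ^ n / fact n \<le> (\<Sum>k\<le>n. x ^ k / fact k)"
    by (rule member_le_sum) (use assms in auto)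
  also have "\<dots> \<le> exp x"
    using assms summable_exp_generic[of x]
    by (auto simp: exp_def divide_inverse ac_simps intro!: sum_le_suminf)
  finally show ?thesis .
qed

lemma poisson_tail:
  assumes x: "(x::real) \<ge> 1"
  shows "(\<Sum>n<i. (x * real i) ^ n / fact n * exp (- (x * real i)))
          \<le> real i * exp (- (x - 1 - ln x) * real i)"
proof -
  have "(x * real i) ^ n / fact n * exp (- (x * real i)) \<le> exp (- (x - 1 - ln x) * real i)"
    if "n < i" for n
  proof -
    have "(x * real i) ^ n / fact n = x ^ n * (real i ^ n / fact n)"
      by (simp add: power_mult_distrib)
    also have "\<dots> \<le> x ^ i * exp (real i)"
      by (intro mult_mono power_increasing pow_fact_le_exp) (use x that in auto)
    also have "\<dots> = exp (ln x * real i + real i)"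
      using x powr_realpow[of x i] by (simp add: exp_add powr_def mult.commute)
    finally have "(x * real i) ^ n / fact n * exp (- (x * real i))
        \<le> exp (ln x * real i + real i) * exp (- (x * real i))"
      by (rule mult_right_mono) simp
    also have "\<dots> = exp (- (x - 1 - ln x) * real i)"
      by (simp add: exp_add[symmetric] algebra_simps)
    finally show ?thesis .
  qed
  then have "(\<Sum>n<i. (x * real i) ^ n / fact n * exp (- (x * real i))) \<le> (\<Sum>n<i. exp (- (x - 1 - ln x) * real i))"
    by (intro sum_mono) auto
  then show ?thesis by simp
qed


lemma bad_measure:
  assumes ppp: "ppp_inv_sq M w" and s: "s > 0" and i: "i \<ge> 1"
  shows "measure M {\<omega>\<in>space M. w \<omega> (i - 1) < s}
           \<le> (\<Sum>n<i. (1/s) ^ n / fact n * exp (- (1/s)))"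
proof -
  have P: "prob_space M" using ppp unfolding ppp_inv_sq_def by blast
  have dec: "\<And>\<omega> j. \<omega> \<in> space M \<Longrightarrow> w \<omega> (Suc j) < w \<omega> j"
    using ppp unfolding ppp_inv_sq_def by blast
  define C where "C = (\<lambda>\<omega>. card {j. w \<omega> j \<in> {s..}})"
  have int: "inv_sq_intensity {s..} = ennreal (1/s)" using s by (rule intensity_atLeast)
  have H: "prob_space.indep_vars M (\<lambda>_. count_space (UNIV :: nat set))
            (\<lambda>j \<omega>. card {i. w \<omega> i \<in> (\<lambda>_::nat. {s..}) j}) {..<1} \<and>
          (\<forall>j<1. \<forall>n::nat.
             measure M {\<omega>\<in>space M. card {i. w \<omega> i \<in> (\<lambda>_::nat. {s..}) j} = n}
               = enn2real (inv_sq_intensity ((\<lambda>_::nat. {s..}) j)) ^ n / fact n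
                 * exp (- enn2real (inv_sq_intensity ((\<lambda>_::nat. {s..}) j))))"
    using ppp unfolding ppp_inv_sq_def
    apply (elim conjE)
    apply (erule allE[where x="\<lambda>_::nat. {s..}"])
    apply (erule allE[where x=1])
    using s int by (auto simp: disjoint_family_on_def)
  have meas: "C \<in> measurable M (count_space UNIV)"
    using H P unfolding C_def by (auto simp: prob_space.indep_vars_def)
  have pm: "measure M {\<omega>\<in>space M. C \<omega> = n} = (1/s) ^ n / fact n * exp (- (1/s))" for n
    using H s int unfolding C_def by auto
  have sets: "{\<omega>\<in>space M. C \<omega> = n} \<in> sets M" for n
    using meas by measurable
  have sub: "{\<omega>\<in>space M. w \<omega> (i - 1) < s} \<subseteq> (\<Union>n\<in>{..<i}. {\<omega>\<in>space M. C \<omega> = n})"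
  proof
    fix \<omega> assume \<omega>: "\<omega> \<in> {\<omega>\<in>space M. w \<omega> (i - 1) < s}"
    have "C \<omega> < i"
    proof (rule ccontr)
      assume "\<not> C \<omega> < i"
      then have ci: "card {j. s \<le> w \<omega> j} \<ge> i" unfolding C_def by simp
      have "\<exists>j. s \<le> w \<omega> j \<and> j \<ge> i - 1"
      proof (rule ccontr)
        assume "\<not> ?thesis"
        then have "{j. s \<le> w \<omega> j} \<subseteq> {..<i-1}" by auto
        then have "card {j. s \<le> w \<omega> j} \<le> i - 1"
          using card_mono[of "{..<i-1}"] by fastforce
        then show False using ci i by linarith
      qed
      then obtain j where j: "s \<le> w \<omega> j" "j \<ge> i - 1" by blast
      have "decseq (w \<omega>)" using dec \<omega> by (intro decseq_SucI less_imp_le) auto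
      then have "w \<omega> j \<le> w \<omega> (i - 1)" using j by (auto simp: decseq_def)
      then show False using j \<omega> by simp
    qed
    then show "\<omega> \<in> (\<Union>n\<in>{..<i}. {\<omega>\<in>space M. C \<omega> = n})" using \<omega> by auto
  qed
  have "measure M {\<omega>\<in>space M. w \<omega> (i - 1) < s} \<le> measure M (\<Union>n\<in>{..<i}. {\<omega>\<in>space M. C \<omega> = n})"
    using sub sets P by (intro finite_measure.finite_measure_mono prob_space.axioms(1)) auto
  also have "\<dots> \<le> (\<Sum>n<i. measure M {\<omega>\<in>space M. C \<omega> = n})"
    using sets by (intro measure_UNION_le) auto
  also have "\<dots> = (\<Sum>n<i. (1/s) ^ n / fact n * exp (- (1/s)))" using pm by simp
  finally show ?thesis .
qed



theorem lemma4p2: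
  fixes M :: "'a measure" and w :: "'a \<Rightarrow> nat \<Rightarrow> real" and \<beta> c \<delta> :: real
  assumes "ppp_inv_sq M w"
    and "0 < \<beta>" and "\<beta> < 1" and "c > 1 - \<beta>" and "0 \<le> \<delta>" and "\<delta> < 1"
  shows "\<forall>\<eta>>0. (\<lambda>N::nat. measure M {\<omega>\<in>space M.
            (\<Sum>i\<in>{nat \<lceil>real N powr \<delta>\<rceil>..N}. w \<omega> (i - 1) powr \<beta>) \<le> real N powr (1 - \<beta>) / c})
          \<in> o(\<lambda>N. real N powr (- \<eta>))"
proof (intro allI impI)
  fix \<eta> :: real assume \<eta>: "\<eta> > 0"
  note ppp = assms(1)
  have P: "prob_space M" using ppp unfolding ppp_inv_sq_def by blast
  have wm: "\<And>i. (\<lambda>\<omega>. w \<omega> i) \<in> borel_measurable M" using ppp unfolding ppp_inv_sq_def by blast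
  have wpos: "\<And>\<omega> i. \<omega> \<in> space M \<Longrightarrow> 0 < w \<omega> i" using ppp unfolding ppp_inv_sq_def by blast
  define q where "q = (1 - \<beta>) / c"
  have c0: "c > 0" using assms by simp
  have q0: "0 < q" and q1: "q < 1" using assms c0 by (auto simp: q_def divide_less_eq)
  define x where "x = 1 + ((1+q)/(2*q) - 1)/2"
  have x1: "x > 1" and x2: "x < (1+q)/(2*q)"
    using q0 q1 by (auto simp: x_def field_simps)
  define \<gamma> where "\<gamma> = x - 1 - ln x"
  have \<gamma>: "\<gamma> > 0" using ln_add_one_self_less_self[of "x - 1"] x1 by (simp add: \<gamma>_def)
  define \<theta> where "\<theta> = ((1-q)/2) powr (1/(1-\<beta>)) / 2"
  have \<theta>0: "\<theta> > 0" using q1 by (simp add: \<theta>_def)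
  have "((1-q)/2) powr (1/(1-\<beta>)) \<le> 1 powr (1/(1-\<beta>))"
    using q0 q1 assms by (intro powr_mono2) auto
  then have \<theta>1: "\<theta> \<le> 1/2" by (simp add: \<theta>_def)
  have \<theta>p: "(2*\<theta>) powr (1-\<beta>) = (1-q)/2"
    using q1 assms by (simp add: \<theta>_def powr_powr)
  define h where "h = (\<lambda>N::nat. (real N + 1) * real N * exp (- (\<gamma>*\<theta>) * real N))"
  have ho: "h \<in> o(\<lambda>N. real N powr (- \<eta>))"
    unfolding h_def using \<gamma> \<theta>0 \<eta> by real_asymp
  have ev1: "eventually (\<lambda>N::nat. 1 \<le> \<theta> * real N) at_top" using \<theta>0 by real_asymp
  have ev2: "eventually (\<lambda>N::nat. real N powr \<delta> \<le> \<theta> * real N) at_top" using \<theta>0 assms(6) by real_asymp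
  define T where "T = (\<lambda>N::nat. {\<omega>\<in>space M.
            (\<Sum>i\<in>{nat \<lceil>real N powr \<delta>\<rceil>..N}. w \<omega> (i - 1) powr \<beta>) \<le> real N powr (1 - \<beta>) / c})"
  have main: "measure M (T N) \<le> h N" if N1: "1 \<le> \<theta> * real N" and N2: "real N powr \<delta> \<le> \<theta> * real N" for N
  proof -
    define a where "a = nat \<lceil>real N powr \<delta>\<rceil>"
    define b where "b = nat \<lceil>\<theta> * real N\<rceil>"
    have b1: "real b \<ge> \<theta> * real N" "real b \<le> \<theta> * real N + 1" using N1 by (auto simp: b_def)
    have bge: "b \<ge> 1" using b1 N1 by linarith
    have ab: "a \<le> b" unfolding a_def b_def using N2 by (intro nat_mono ceiling_mono)
    have b2: "real b \<le> 2 * \<theta> * real N" using b1 N1 by linarith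
    have "2 * \<theta> * real N \<le> 1 * real N" using \<theta>1 by (intro mult_right_mono) auto
    then have "real b \<le> real N" using b2 by linarith
    then have bN: "b \<le> N" by simp
    have N0: "real N > 0" using N1 by (cases "N = 0") auto
    define bad where "bad = (\<lambda>i. {\<omega>\<in>space M. w \<omega> (i - 1) < 1 / (x * real i)})"
    have badm: "bad i \<in> sets M" for i unfolding bad_def using wm[of "i-1"] by measurable
    have sub: "T N \<subseteq> (\<Union>i\<in>{b..N}. bad i)"
    proof
      fix \<omega> assume \<omega>: "\<omega> \<in> T N"
      show "\<omega> \<in> (\<Union>i\<in>{b..N}. bad i)"
      proof (rule ccontr)
        assume "\<omega> \<notin> (\<Union>i\<in>{b..N}. bad i)"
        then have good: "\<And>i. i \<in> {b..N} \<Longrightarrow> 1 / (x * real i) \<le> w \<omega> (i - 1)"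
          using \<omega> unfolding bad_def T_def by force
        define Y where "Y = real N powr (1 - \<beta>)"
        have Y0: "Y > 0" using N0 by (simp add: Y_def)
        define S where "S = (\<Sum>i\<in>{a..N}. w \<omega> (i - 1) powr \<beta>)"
        have "S \<le> Y / c" using \<omega> unfolding S_def T_def a_def Y_def by simp
        have "(\<Sum>i\<in>{b..N}. w \<omega> (i - 1) powr \<beta>) \<le> S"
          unfolding S_def using ab by (intro sum_mono2) auto
        moreover have "(\<Sum>i\<in>{b..N}. (1 / (x * real i)) powr \<beta>) \<le> (\<Sum>i\<in>{b..N}. w \<omega> (i - 1) powr \<beta>)"
          using good assms x1 by (intro sum_mono powr_mono2) auto
        moreover have "(\<Sum>i\<in>{b..N}. (1 / (x * real i)) powr \<beta>) = x powr (-\<beta>) * (\<Sum>i\<in>{b..N}. real i powr (-\<beta>))"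
          unfolding sum_distrib_left
          using x1 bge by (intro sum.cong refl) (auto simp: powr_minus_divide powr_mult powr_divide)
        moreover have "((real N + 1) powr (1-\<beta>) - real b powr (1-\<beta>)) / (1-\<beta>) \<le> (\<Sum>i\<in>{b..N}. real i powr (-\<beta>))"
          using assms bge bN by (intro tele_sum) auto
        moreover have "Y \<le> (real N + 1) powr (1-\<beta>)"
          unfolding Y_def using assms by (intro powr_mono2) auto
        moreover have "real b powr (1-\<beta>) \<le> (2 * \<theta> * real N) powr (1-\<beta>)"
          using assms b2 by (intro powr_mono2) auto
        moreover have "(2 * \<theta> * real N) powr (1-\<beta>) = (1-q)/2 * Y"
          using \<theta>0 N0 \<theta>p by (simp add: Y_def powr_mult)
        moreover have "x powr \<beta> \<le> x powr 1" using x1 assms by (intro powr_mono) auto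
        then have xb: "x powr (-\<beta>) \<ge> 1 / x" using x1 by (simp add: powr_minus_divide divide_simps)
        ultimately have "S \<ge> x powr (-\<beta>) * (((1+q)/2 * Y) / (1-\<beta>))"
        proof -
          assume a1: "(\<Sum>i\<in>{b..N}. w \<omega> (i - 1) powr \<beta>) \<le> S"
            and a2: "(\<Sum>i\<in>{b..N}. (1 / (x * real i)) powr \<beta>) \<le> (\<Sum>i\<in>{b..N}. w \<omega> (i - 1) powr \<beta>)"
            and a3: "(\<Sum>i\<in>{b..N}. (1 / (x * real i)) powr \<beta>) = x powr (-\<beta>) * (\<Sum>i\<in>{b..N}. real i powr (-\<beta>))"
            and a4: "((real N + 1) powr (1-\<beta>) - real b powr (1-\<beta>)) / (1-\<beta>) \<le> (\<Sum>i\<in>{b..N}. real i powr (-\<beta>))"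
            and a5: "Y \<le> (real N + 1) powr (1-\<beta>)"
            and a6: "real b powr (1-\<beta>) \<le> (2 * \<theta> * real N) powr (1-\<beta>)"
            and a7: "(2 * \<theta> * real N) powr (1-\<beta>) = (1-q)/2 * Y"
          have "((1+q)/2 * Y) / (1-\<beta>) \<le> ((real N + 1) powr (1-\<beta>) - real b powr (1-\<beta>)) / (1-\<beta>)"
          proof (rule divide_right_mono)
            have e: "(1+q)/2*Y = Y - (1-q)/2*Y" by (simp add: field_simps)
            show "(1+q)/2*Y \<le> (real N + 1) powr (1-\<beta>) - real b powr (1-\<beta>)"
              using a5 a6 a7 e by linarith
          qed (use assms in auto)
          also note a4
          finally have "x powr (-\<beta>) * (((1+q)/2 * Y) / (1-\<beta>)) \<le> x powr (-\<beta>) * (\<Sum>i\<in>{b..N}. real i powr (-\<beta>))"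
            by (intro mult_left_mono) auto
          then show ?thesis using a1 a2 a3 by linarith
        qed
        moreover have gt: "x powr (-\<beta>) * ((1+q)/2) > q"
        proof -
          have "1 / x > 2 * q / (1 + q)" using x1 x2 q0 by (simp add: field_simps)
          then have "x powr (-\<beta>) > 2 * q / (1 + q)" using xb by linarith
          then show ?thesis using q0 by (simp add: field_simps)
        qed
        ultimately have Sge: "S \<ge> (x powr (-\<beta>) * ((1+q)/2)) * Y / (1-\<beta>)" and gt': "x powr (-\<beta>) * ((1+q)/2) > q"
          by simp_all
        have "q * Y / (1-\<beta>) < (x powr (-\<beta>) * ((1+q)/2)) * Y / (1-\<beta>)"
          using Y0 assms(3) gt' by (intro divide_strict_right_mono mult_strict_right_mono) auto
        then have "S > q * Y / (1-\<beta>)" using Sge by linarith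
        moreover have "q * Y / (1-\<beta>) = Y / c" using assms by (simp add: q_def)
        ultimately show False using \<open>S \<le> Y / c\<close> by linarith
      qed
    qed
    have "measure M (T N) \<le> measure M (\<Union>i\<in>{b..N}. bad i)"
      using sub badm P by (intro finite_measure.finite_measure_mono prob_space.axioms(1)) auto
    also have "\<dots> \<le> (\<Sum>i\<in>{b..N}. measure M (bad i))"
      using badm by (intro measure_UNION_le) auto
    also have "\<dots> \<le> (\<Sum>i\<in>{b..N}. real N * exp (- (\<gamma>*\<theta>) * real N))"
    proof (intro sum_mono)
      fix i assume i: "i \<in> {b..N}"
      then have i1: "i \<ge> 1" using bge by auto
      have "measure M (bad i) \<le> (\<Sum>n<i. (1/(1 / (x * real i))) ^ n / fact n * exp (- (1/(1 / (x * real i)))))"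
        unfolding bad_def using x1 i1 by (intro bad_measure ppp) auto
      also have "\<dots> = (\<Sum>n<i. (x * real i) ^ n / fact n * exp (- (x * real i)))" by simp
      also have "\<dots> \<le> real i * exp (- (x - 1 - ln x) * real i)"
        using x1 by (intro poisson_tail) auto
      also have "\<dots> \<le> real N * exp (- (\<gamma>*\<theta>) * real N)"
      proof (intro mult_mono)
        have "\<theta> * real N \<le> real i" using i b1 by auto
        then have "\<gamma> * (\<theta> * real N) \<le> \<gamma> * real i" using \<gamma> by (intro mult_left_mono) auto
        then show "exp (- (x - 1 - ln x) * real i) \<le> exp (- (\<gamma>*\<theta>) * real N)"
          unfolding \<gamma>_def[symmetric] by (simp add: mult.assoc)
      qed (use i in auto)
      finally show "measure M (bad i) \<le> real N * exp (- (\<gamma>*\<theta>) * real N)" .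
    qed
    also have "\<dots> = real (card {b..N}) * (real N * exp (- (\<gamma>*\<theta>) * real N))" by simp
    also have "\<dots> \<le> (real N + 1) * (real N * exp (- (\<gamma>*\<theta>) * real N))"
      by (intro mult_right_mono) auto
    also have "\<dots> = h N" unfolding h_def by simp
    finally show ?thesis .
  qed
  have "(\<lambda>N. measure M (T N)) \<in> O(h)"
  proof (rule bigoI[where c=1])
    show "eventually (\<lambda>N. norm (measure M (T N)) \<le> 1 * norm (h N)) at_top"
      using eventually_conj[OF ev1 ev2]
    proof (rule eventually_mono)
      fix N assume "1 \<le> \<theta> * real N \<and> real N powr \<delta> \<le> \<theta> * real N"
      then have "measure M (T N) \<le> h N" using main by blast
      moreover have "h N \<ge> 0" by (simp add: h_def)
      ultimately show "norm (measure M (T N)) \<le> 1 * norm (h N)" by simp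
    qed
  qed
  from landau_o.big_small_trans[OF this ho]
  show "(\<lambda>N::nat. measure M {\<omega>\<in>space M.
            (\<Sum>i\<in>{nat \<lceil>real N powr \<delta>\<rceil>..N}. w \<omega> (i - 1) powr \<beta>) \<le> real N powr (1 - \<beta>) / c})
          \<in> o(\<lambda>N. real N powr (- \<eta>))" unfolding T_def .
qed

end
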